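(* Let $(\vec b_1,\ldots,\vec b_d)$ be an HKZ-reduced basis of a lattice of dimension $d\ge2$. If $x_1,x_2$ are real numbers with $1\le x_1<x_2<d$, then $$\tilde\pi_{[x_2,d]}\ge \sqrt d^{\,\log\frac{d-x_2}{d-x_1}}\cdot\tilde\pi_{[x_1,d]}.$$
   Context: Logarithms are natural. Gram–Schmidt: $\vec b_i^*=\vec b_i-\sum_{j<i}\mu_{i,j}\vec b_j^*$, $\mu_{i,j}=\langle\vec b_i,\vec b_j^*\rangle/\|\vec b_j^*\|^2$. HKZ-reduced: size-reduced ($|\mu_{i,j}|\le1/2$), $\vec b_1$ a shortest nonzero lattice vector, and projections of $\vec b_2,\ldots,\vec b_d$ orthogonally to $\vec b_1$ HKZ-reduced. For real $a$ and integer $b$ with $1\le a<b\le d$, $$\tilde\pi_{[a,b]}=\Big(\|\vec b_{\lfloor a\rfloor}^*\|^{1-a+\lfloor a\rfloor}\prod_{i=\lfloor a\rfloor+1}^{b}\|\vec b_i^*\|\Big)^{\frac{1}{b+1-a}}.$$ *)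

theory Defs
  imports "HOL-Analysis.Analysis"
begin

text \<open>Bases are lists of vectors in Euclidean space, index i (1-based in the paper)
  corresponds to list position i-1.\<close>

fun gso_aux :: "(real^'n) list \<Rightarrow> (real^'n) list \<Rightarrow> (real^'n) list" where
  "gso_aux acc [] = acc"
| "gso_aux acc (b # bs) =
     gso_aux (acc @ [b - (\<Sum>v\<leftarrow>acc. ((b \<bullet> v) / (norm v)^2) *\<^sub>R v)]) bs"

definition gso :: "(real^'n) list \<Rightarrow> (real^'n) list" where
  "gso bs = gso_aux [] bs"

text \<open>Gram--Schmidt coefficient mu_{i,j} (0-based list indices).\<close>
definition gs_mu :: "(real^'n) list \<Rightarrow> nat \<Rightarrow> nat \<Rightarrow> real" where
  "gs_mu bs i j = (bs ! i \<bullet> gso bs ! j) / (norm (gso bs ! j))^2"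

definition size_reduced :: "(real^'n) list \<Rightarrow> bool" where
  "size_reduced bs = (\<forall>i<length bs. \<forall>j<i. \<bar>gs_mu bs i j\<bar> \<le> 1/2)"

definition lattice_of :: "(real^'n) list \<Rightarrow> (real^'n) set" where
  "lattice_of bs = {(\<Sum>i<length bs. of_int (z i) *\<^sub>R (bs ! i)) | z. True}"

definition shortest_in :: "real^'n \<Rightarrow> (real^'n) set \<Rightarrow> bool" where
  "shortest_in v L = (v \<in> L \<and> v \<noteq> 0 \<and> (\<forall>w\<in>L. w \<noteq> 0 \<longrightarrow> norm v \<le> norm w))"

definition proj_perp :: "real^'n \<Rightarrow> real^'n \<Rightarrow> real^'n" where
  "proj_perp b v = v - ((v \<bullet> b) / (norm b)^2) *\<^sub>R b"

fun hkz :: "(real^'n) list \<Rightarrow> bool" where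
  "hkz [] = True"
| "hkz (b # bs) = (size_reduced (b # bs) \<and> shortest_in b (lattice_of (b # bs))
                   \<and> hkz (map (proj_perp b) bs))"

definition lattice_basis :: "(real^'n) list \<Rightarrow> bool" where
  "lattice_basis bs = (distinct bs \<and> independent (set bs))"

text \<open>||b_i*|| for 1-based index i.\<close>
definition bstar_norm :: "(real^'n) list \<Rightarrow> nat \<Rightarrow> real" where
  "bstar_norm bs i = norm (gso bs ! (i - 1))"

definition tpi :: "(real^'n) list \<Rightarrow> real \<Rightarrow> nat \<Rightarrow> real" where
  "tpi bs a b = (bstar_norm bs (nat \<lfloor>a\<rfloor>) powr (1 - a + of_int \<lfloor>a\<rfloor>)
      * (\<Prod>i = nat \<lfloor>a\<rfloor> + 1 .. b. bstar_norm bs i)) powr (1 / (real b + 1 - a))"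

end

theory Submission
  imports Defs
begin


lemma gso_aux_append: "gso_aux acc (xs @ ys) = gso_aux (gso_aux acc xs) ys"
  by (induction xs arbitrary: acc) auto

lemma gso_aux_len: "length (gso_aux acc xs) = length acc + length xs"
  by (induction xs arbitrary: acc) auto

lemma gso_aux_prefix0: "\<exists>r. gso_aux acc xs = acc @ r"
proof (induction xs arbitrary: acc)
  case Nil then show ?case by simp
next
  case (Cons a xs)
  obtain r where "gso_aux (acc @ [a - (\<Sum>v\<leftarrow>acc. ((a \<bullet> v) / (norm v)^2) *\<^sub>R v)]) xs
     = (acc @ [a - (\<Sum>v\<leftarrow>acc. ((a \<bullet> v) / (norm v)^2) *\<^sub>R v)]) @ r"
    using Cons.IH by blast
  then show ?case by simp
qed

lemma gso_aux_prefix: "take (length acc) (gso_aux acc xs) = acc"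
  using gso_aux_prefix0[of acc xs] by auto

definition gnew :: "(real^'n) list \<Rightarrow> real^'n \<Rightarrow> real^'n" where
  "gnew g x = x - (\<Sum>v\<leftarrow>g. ((x \<bullet> v) / (norm v)^2) *\<^sub>R v)"

lemma gso_snoc: "gso (xs @ [x]) = gso xs @ [gnew (gso xs) x]"
  unfolding gso_def gnew_def by (simp add: gso_aux_append)

lemma gso_len[simp]: "length (gso xs) = length xs"
  by (simp add: gso_def gso_aux_len)


lemma gso_take: "take i (gso xs) = gso (take i xs)"
proof (cases "i \<le> length xs")
  case False then show ?thesis by simp
next
  case True
  have e: "gso xs = gso_aux (gso (take i xs)) (drop i xs)"
    unfolding gso_def gso_aux_append[symmetric] by simp
  have l: "length (gso (take i xs)) = i" using True by simp
  have "take i (gso xs) = take i (gso_aux (gso (take i xs)) (drop i xs))"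
    by (subst e) (rule refl)
  also have "\<dots> = gso (take i xs)"
    using gso_aux_prefix[of "gso (take i xs)" "drop i xs"] unfolding l .
  finally show ?thesis .
qed

lemma sum_list_map_nth: "(\<Sum>v\<leftarrow>g. f v) = (\<Sum>i<length g. f (g ! i))"
  by (simp add: sum_list_sum_nth atLeast0LessThan)

definition orthl :: "(real^'n) list \<Rightarrow> bool" where
  "orthl g = (\<forall>i<length g. \<forall>j<length g. i \<noteq> j \<longrightarrow> g ! i \<bullet> g ! j = 0)"

lemma gnew_orth:
  assumes o: "orthl g" and m: "m < length g"
  shows "gnew g x \<bullet> g ! m = 0"
proof -
  have "(\<Sum>v\<leftarrow>g. ((x \<bullet> v) / (norm v)^2) *\<^sub>R v) \<bullet> g ! m
      = (\<Sum>i<length g. ((x \<bullet> g!i) / (norm (g!i))^2) * (g ! i \<bullet> g ! m))"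
    by (simp add: sum_list_map_nth inner_sum_left)
  also have "\<dots> = (\<Sum>i\<in>{m}. ((x \<bullet> g!i) / (norm (g!i))^2) * (g ! i \<bullet> g ! m))"
    by (rule sum.mono_neutral_right) (use o m in \<open>auto simp: orthl_def\<close>)
  also have "\<dots> = x \<bullet> g ! m"
    by (cases "g ! m = 0") (auto simp: power2_norm_eq_inner)
  finally show ?thesis unfolding gnew_def by (simp add: inner_diff_left)
qed

lemma gso_orthl: "orthl (gso xs)"
proof (induction xs rule: rev_induct)
  case Nil then show ?case by (simp add: orthl_def gso_def)
next
  case (snoc x xs)
  show ?case unfolding orthl_def gso_snoc
  proof (intro allI impI)
    fix i j assume i: "i < length (gso xs @ [gnew (gso xs) x])"
      and j: "j < length (gso xs @ [gnew (gso xs) x])" and ij: "i \<noteq> j"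
    consider "i < length xs" "j < length xs" | "i = length xs" "j < length xs"
      | "j = length xs" "i < length xs" using i j ij by fastforce
    then show "(gso xs @ [gnew (gso xs) x]) ! i \<bullet> (gso xs @ [gnew (gso xs) x]) ! j = 0"
    proof cases
      case 1 then show ?thesis using snoc ij by (simp add: nth_append orthl_def)
    next
      case 2 then show ?thesis using gnew_orth[OF snoc, of j x] by (simp add: nth_append)
    next
      case 3 then show ?thesis using gnew_orth[OF snoc, of i x] by (simp add: nth_append inner_commute)
    qed
  qed
qed

lemma gnew_span: "x - gnew g x \<in> span (set g)"
proof -
  have "(\<Sum>i<length g. ((x \<bullet> g!i) / (norm (g!i))^2) *\<^sub>R g!i) \<in> span (set g)"
    by (rule span_sum, rule span_scale, rule span_base, simp)
  then show ?thesis unfolding gnew_def sum_list_map_nth by simp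
qed

lemma span_insert_cong:
  assumes "span A = span B" shows "span (insert a A) = span (insert a B)"
proof -
  have "A \<subseteq> span (insert a B)" using assms span_superset[of A] span_mono[of B "insert a B"] by blast
  moreover have "B \<subseteq> span (insert a A)" using assms span_superset[of B] span_mono[of A "insert a A"] by blast
  ultimately show ?thesis unfolding span_eq by (auto intro: span_base)
qed

lemma span_insert_shift:
  assumes "s \<in> span A" shows "span (insert (x - s) A) = span (insert x A)"
proof -
  have "x - s \<in> span (insert x A)"
    by (meson assms span_base span_diff insertI1 span_mono subset_insertI subsetD)
  moreover have "x \<in> span (insert (x - s) A)"
  proof -
    have "(x - s) + s \<in> span (insert (x - s) A)"
      by (meson assms span_add span_base insertI1 span_mono subset_insertI subsetD)
    then show ?thesis by simp
  qed
  ultimately show ?thesis unfolding span_eq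
    by (auto intro: span_base)
qed

lemma gso_span: "span (set (gso xs)) = span (set xs)"
proof (induction xs rule: rev_induct)
  case Nil then show ?case by (simp add: gso_def)
next
  case (snoc x xs)
  have s: "x - gnew (gso xs) x \<in> span (set xs)" using gnew_span snoc by metis
  have "gnew (gso xs) x = x - (x - gnew (gso xs) x)" by simp
  then have "span (insert (gnew (gso xs) x) (set xs)) = span (insert x (set xs))"
    using span_insert_shift[OF s, of x] by simp
  moreover have "span (insert (gnew (gso xs) x) (set (gso xs))) = span (insert (gnew (gso xs) x) (set xs))"
    using snoc by (rule span_insert_cong)
  ultimately show ?case by (simp add: gso_snoc)
qed



lemma orth_take:
  assumes o: "orthl g" and j: "j < length g" and y: "y \<in> span (set (take j g))"
  shows "y \<bullet> g ! j = 0"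
proof -
  have "orthogonal (g ! j) y"
  proof (rule orthogonal_to_span[OF y])
    fix z assume "z \<in> set (take j g)"
    then obtain m where m: "m < length (take j g)" "z = take j g ! m" by (auto simp: in_set_conv_nth)
    then have "m < j" "z = g ! m" by auto
    then show "orthogonal (g ! j) z" using o j unfolding orthl_def orthogonal_def by auto
  qed
  then show ?thesis by (simp add: orthogonal_def inner_commute)
qed

lemma gso_nth: assumes "i < length cs" shows "gso cs ! i = gnew (take i (gso cs)) (cs ! i)"
proof -
  have "take (Suc i) cs = take i cs @ [cs ! i]" using assms by (simp add: take_Suc_conv_app_nth)
  then have "gso (take (Suc i) cs) = gso (take i cs) @ [gnew (gso (take i cs)) (cs ! i)]"
    by (simp add: gso_snoc)
  then have "take (Suc i) (gso cs) = take i (gso cs) @ [gnew (take i (gso cs)) (cs ! i)]"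
    by (simp add: gso_take)
  then have "take (Suc i) (gso cs) ! i = gnew (take i (gso cs)) (cs ! i)"
    using assms by (simp add: nth_append)
  then show ?thesis by simp
qed

lemma gso_diff_span: assumes "i < length cs"
  shows "cs ! i - gso cs ! i \<in> span (set (take i (gso cs)))"
  by (subst gso_nth[OF assms]) (rule gnew_span)

lemma span_take_mono: "i \<le> j \<Longrightarrow> span (set (take i g)) \<subseteq> span (set (take j g))"
  by (rule span_mono) (metis set_take_subset_set_take)

lemma gso_cs_orth: assumes "i < j" "j < length cs"
  shows "cs ! i \<bullet> gso cs ! j = 0"
proof -
  have a: "gso cs ! i \<in> span (set (take j (gso cs)))"
    using assms by (intro span_base) (auto simp: in_set_conv_nth intro!: exI[of _ i])
  have b: "cs ! i - gso cs ! i \<in> span (set (take j (gso cs)))"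
    using gso_diff_span[of i cs] span_take_mono[of i j "gso cs"] assms by auto
  have "cs ! i = gso cs ! i + (cs ! i - gso cs ! i)" by simp
  also have "\<dots> \<in> span (set (take j (gso cs)))" using a b by (rule span_add)
  finally show ?thesis using orth_take[OF gso_orthl] assms by simp
qed

lemma gso_cs_self: assumes "j < length cs"
  shows "cs ! j \<bullet> gso cs ! j = gso cs ! j \<bullet> gso cs ! j"
proof -
  have "(cs ! j - gso cs ! j) \<bullet> gso cs ! j = 0"
    using orth_take[OF gso_orthl] gso_diff_span[OF assms] assms by simp
  then show ?thesis by (simp add: inner_diff_left)
qed

lemma cs_in_span: assumes "i < length cs" shows "cs ! i \<in> span (set (gso cs))"
  using assms gso_span[of cs] by (simp add: span_base)

lemma gso_nonzero:
  assumes lb: "lattice_basis cs" and j: "j < length cs"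
  shows "gso cs ! j \<noteq> 0"
proof
  assume z: "gso cs ! j = 0"
  have "cs ! j \<in> span (set (take j (gso cs)))" using gso_diff_span[OF j] z by simp
  also have "\<dots> = span (set (take j cs))" by (simp add: gso_take gso_span)
  also have "\<dots> \<subseteq> span (set cs - {cs ! j})"
  proof (rule span_mono)
    have "distinct cs" using lb by (simp add: lattice_basis_def)
    have "cs ! j \<notin> set (take j cs)"
    proof
      assume "cs ! j \<in> set (take j cs)"
      then obtain m where m: "m < length (take j cs)" "take j cs ! m = cs ! j"
        by (auto simp: in_set_conv_nth)
      then have "m < j" "cs ! m = cs ! j" by auto
      then show False using nth_eq_iff_index_eq[OF \<open>distinct cs\<close>, of m j] j by simp
    qed
    then show "set (take j cs) \<subseteq> set cs - {cs ! j}" using set_take_subset by fastforce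
  qed
  finally have "dependent (set cs)" unfolding dependent_def using j by auto
  then show False using lb by (simp add: lattice_basis_def)
qed



lemma inner_sum_list_left: "(\<Sum>v\<leftarrow>xs. f v) \<bullet> y = (\<Sum>v\<leftarrow>xs. f v \<bullet> y)"
  by (induction xs) (auto simp: inner_add_left)

lemma proj_perp_orth: "proj_perp b x \<bullet> b = 0"
  by (cases "b = 0") (auto simp: proj_perp_def inner_diff_left power2_norm_eq_inner)

lemma gso_aux_proj:
  assumes "\<forall>v\<in>set acc. v \<bullet> b = 0"
  shows "gso_aux (b # acc) xs = b # gso_aux acc (map (proj_perp b) xs)"
  using assms
proof (induction xs arbitrary: acc)
  case Nil then show ?case by simp
next
  case (Cons x xs)
  define p where "p = proj_perp b x"
  define N where "N = p - (\<Sum>v\<leftarrow>acc. ((p \<bullet> v) / (norm v)^2) *\<^sub>R v)"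
  have pv: "p \<bullet> v = x \<bullet> v" if "v \<in> set acc" for v
  proof -
    have "b \<bullet> v = 0" using Cons.prems that inner_commute[of b v] by simp
    then show ?thesis by (simp add: p_def proj_perp_def inner_diff_left inner_diff_right inner_commute)
  qed
  have e1: "(\<Sum>v\<leftarrow>acc. ((p \<bullet> v) / (norm v)^2) *\<^sub>R v) = (\<Sum>v\<leftarrow>acc. ((x \<bullet> v) / (norm v)^2) *\<^sub>R v)"
    by (intro arg_cong[where f=sum_list] map_cong refl) (simp add: pv)
  have eN: "x - (\<Sum>v\<leftarrow>b # acc. ((x \<bullet> v) / (norm v)^2) *\<^sub>R v) = N"
    unfolding N_def e1 by (simp add: p_def proj_perp_def)
  have Nb: "N \<bullet> b = 0"
  proof -
    have "(\<Sum>v\<leftarrow>acc. ((p \<bullet> v) / (norm v)^2) *\<^sub>R v) \<bullet> b = 0"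
      unfolding inner_sum_list_left using Cons.prems
      by (simp add: sum_list_map_nth) 
    then show ?thesis unfolding N_def using proj_perp_orth[of b x] by (simp add: p_def inner_diff_left)
  qed
  have "gso_aux (b # acc) (x # xs) = gso_aux ((b # acc) @ [N]) xs" using eN by simp
  also have "\<dots> = gso_aux (b # (acc @ [N])) xs" by simp
  also have "\<dots> = b # gso_aux (acc @ [N]) (map (proj_perp b) xs)"
    using Cons.IH[of "acc @ [N]"] Cons.prems Nb by auto
  also have "\<dots> = b # gso_aux acc (map (proj_perp b) (x # xs))" by (simp add: N_def p_def)
  finally show ?case .
qed

lemma gso_proj: "gso (map (proj_perp b) bs) = tl (gso (b # bs))"
  using gso_aux_proj[of "[]" b bs] by (simp add: gso_def)

lemma gso_hd: "gso (b # bs) ! 0 = b"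
proof -
  obtain r where "gso_aux [b] bs = [b] @ r" using gso_aux_prefix0 by blast
  then show ?thesis by (simp add: gso_def)
qed



lemma lat_0: "0 \<in> lattice_of cs"
  unfolding lattice_of_def by (auto intro!: exI[of _ "\<lambda>_. 0"])

lemma lat_diff: assumes "v \<in> lattice_of cs" "w \<in> lattice_of cs" shows "v - w \<in> lattice_of cs"
proof -
  obtain z where z: "v = (\<Sum>i<length cs. of_int (z i) *\<^sub>R (cs ! i))" using assms(1) unfolding lattice_of_def by blast
  obtain y where y: "w = (\<Sum>i<length cs. of_int (y i) *\<^sub>R (cs ! i))" using assms(2) unfolding lattice_of_def by blast
  have "v - w = (\<Sum>i<length cs. of_int (z i - y i) *\<^sub>R (cs ! i))"
    unfolding z y sum_subtractf[symmetric] by (simp add: scaleR_diff_left)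
  then show ?thesis unfolding lattice_of_def mem_Collect_eq by (intro exI[of _ "\<lambda>i. z i - y i"]) simp
qed

lemma lat_add: assumes "v \<in> lattice_of cs" "m < length cs" shows "v + of_int k *\<^sub>R (cs ! m) \<in> lattice_of cs"
proof -
  obtain z where z: "v = (\<Sum>i<length cs. of_int (z i) *\<^sub>R (cs ! i))" using assms(1) unfolding lattice_of_def by blast
  have "(\<Sum>i<length cs. of_int (z i + (if i = m then k else 0)) *\<^sub>R (cs ! i))
     = v + (\<Sum>i<length cs. (if i = m then of_int k *\<^sub>R (cs ! i) else 0))"
    unfolding z sum.distrib[symmetric] by (intro sum.cong refl) (simp add: scaleR_add_left)
  also have "\<dots> = v + of_int k *\<^sub>R (cs ! m)" using assms(2) by (simp add: sum.delta)
  finally show ?thesis unfolding lattice_of_def mem_Collect_eq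
    by (intro exI[of _ "\<lambda>i. z i + (if i = m then k else 0)"]) simp
qed

lemma lat_span: assumes "v \<in> lattice_of cs" shows "v \<in> span (set (gso cs))"
proof -
  obtain z where z: "v = (\<Sum>i<length cs. of_int (z i) *\<^sub>R (cs ! i))" using assms(1) unfolding lattice_of_def by blast
  show ?thesis unfolding z by (intro span_sum span_scale cs_in_span) simp
qed

lemma norm_span_gso:
  fixes g :: "(real^'n) list"
  assumes o: "orthl g" and nz: "\<forall>j<length g. g ! j \<noteq> 0" and v: "v \<in> span (set g)"
  shows "(norm v)^2 = (\<Sum>j<length g. (v \<bullet> g ! j / norm (g ! j))^2)"
proof -
  define u where "u = gnew g v"
  have "v - u \<in> span (set g)" unfolding u_def by (rule gnew_span)
  then have us: "u \<in> span (set g)" using v span_diff[of v "set g" "v - u"] by simp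
  have "orthogonal u u"
  proof (rule orthogonal_to_span[OF us])
    fix y assume "y \<in> set g"
    then obtain m where "m < length g" "y = g ! m" by (auto simp: in_set_conv_nth)
    then show "orthogonal u y" using gnew_orth[OF o] unfolding u_def orthogonal_def by simp
  qed
  then have "u = 0" by (simp add: orthogonal_def)
  then have ve: "v = (\<Sum>i<length g. ((v \<bullet> g!i) / (norm (g!i))^2) *\<^sub>R g!i)"
    unfolding u_def gnew_def sum_list_map_nth by simp
  have "(norm v)^2 = v \<bullet> v" by (simp add: power2_norm_eq_inner)
  also have "\<dots> = (\<Sum>i<length g. ((v \<bullet> g!i) / (norm (g!i))^2) * (g!i \<bullet> v))"
    by (subst (1) ve) (simp add: inner_sum_left)
  also have "\<dots> = (\<Sum>j<length g. (v \<bullet> g ! j / norm (g ! j))^2)"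
    by (intro sum.cong refl) (simp add: inner_commute power_divide power2_eq_square)
  finally show ?thesis .
qed



lemma choose_a:
  fixes r :: "nat \<Rightarrow> real"
  assumes lam: "lam > 0" and P: "(\<Prod>j<n. r j) < lam ^ n"
  shows "\<exists>a::nat. a \<ge> 1 \<and> (\<Prod>j<n. (r j / lam + 1 / real a)) < 1"
proof -
  have lim: "((\<lambda>a::nat. \<Prod>j<n. (r j / lam + 1 / real a)) \<longlongrightarrow> (\<Prod>j<n. (r j / lam + 0))) sequentially"
    by (intro tendsto_intros)
  have "(\<Prod>j<n. (r j / lam + 0)) = (\<Prod>j<n. r j) / lam ^ n"
    by (simp add: prod_dividef)
  also have "\<dots> < 1" using P lam by (simp add: divide_less_eq)
  finally have "eventually (\<lambda>a. (\<Prod>j<n. (r j / lam + 1 / real a)) < 1) sequentially"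
    using order_tendstoD(2)[OF lim] by blast
  then obtain N where N: "\<And>a. a \<ge> N \<Longrightarrow> (\<Prod>j<n. (r j / lam + 1 / real a)) < 1"
    unfolding eventually_sequentially by blast
  show ?thesis using N[of "Suc N"] by (intro exI[of _ "Suc N"]) auto
qed

lemma exists_box:
  fixes cs :: "(real^'n) list"
  assumes n: "length cs = n" and nz: "\<forall>j<n. gso cs ! j \<noteq> 0"
  shows "\<exists>v\<in>lattice_of cs. \<forall>j<n. real (k j) * norm (gso cs ! j) \<le> v \<bullet> gso cs ! j / norm (gso cs ! j)
            \<and> v \<bullet> gso cs ! j / norm (gso cs ! j) < (real (k j) + 1) * norm (gso cs ! j)"
proof -
  define r where "r j = norm (gso cs ! j)" for j
  define t where "t j v = v \<bullet> gso cs ! j / r j" for j v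
  have rpos: "r j > 0" if "j < n" for j using nz that by (simp add: r_def)
  have tc_lt: "t j (cs ! i) = 0" if "i < j" "j < n" for i j
    using gso_cs_orth[of i j cs] that n by (simp add: t_def)
  have tc_eq: "t j (cs ! j) = r j" if "j < n" for j
  proof -
    have "cs ! j \<bullet> gso cs ! j = (r j)^2"
      using gso_cs_self[of j cs] that n by (simp add: r_def power2_norm_eq_inner)
    then show ?thesis using rpos[OF that] by (simp add: t_def power2_eq_square)
  qed
  have tadd: "t j (v + k' *\<^sub>R c) = t j v + k' * t j c" for j v k' c
    by (simp add: t_def inner_add_left add_divide_distrib)
  have aux: "\<exists>v\<in>lattice_of cs. \<forall>j. m \<le> j \<longrightarrow> j < n \<longrightarrow>
       real (k j) * r j \<le> t j v \<and> t j v < (real (k j) + 1) * r j" if "m \<le> n" for m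
    using that
  proof (induction m rule: inc_induct)
    case base then show ?case using lat_0[of cs] by auto
  next
    case (step m)
    then obtain v where v: "v \<in> lattice_of cs" and
      iv: "\<forall>j. Suc m \<le> j \<longrightarrow> j < n \<longrightarrow> real (k j) * r j \<le> t j v \<and> t j v < (real (k j) + 1) * r j"
      by blast
    define q where "q = t m v / r m"
    define z where "z = int (k m) - \<lfloor>q\<rfloor>"
    define v' where "v' = v + of_int z *\<^sub>R cs ! m"
    have mn: "m < n" using step by simp
    have v'L: "v' \<in> lattice_of cs" unfolding v'_def using lat_add[OF v] mn n by simp
    have "real (k j) * r j \<le> t j v' \<and> t j v' < (real (k j) + 1) * r j" if "m \<le> j" "j < n" for j
    proof (cases "j = m")
      case True
      have tv: "t m v = q * r m" using rpos[OF mn] by (simp add: q_def)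
      have "t m v' = r m * (real (k m) + (q - of_int \<lfloor>q\<rfloor>))"
        unfolding v'_def tadd tc_eq[OF mn] tv z_def by (simp add: algebra_simps)
      moreover have "0 \<le> q - of_int \<lfloor>q\<rfloor>" "q - of_int \<lfloor>q\<rfloor> < 1" by linarith+
      ultimately show ?thesis using True rpos[OF mn]
        mult_nonneg_nonneg[of "r m" "q - of_int \<lfloor>q\<rfloor>"] mult_strict_left_mono[of "q - of_int \<lfloor>q\<rfloor>" 1 "r m"]
        by (simp add: distrib_left distrib_right)
    next
      case False
      then have "Suc m \<le> j" using that by simp
      moreover have "t j v' = t j v" unfolding v'_def tadd using tc_lt[of m j] that False by simp
      ultimately show ?thesis using iv that by simp
    qed
    then show ?case using v'L by blast
  qed
  show ?thesis using aux[of 0] by (simp add: r_def t_def)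
qed



lemma pigeon:
  fixes cs :: "(real^'n) list" and lam :: real
  assumes n: "length cs = n" and nz: "\<forall>j<n. gso cs ! j \<noteq> 0" and lam: "lam > 0"
    and P: "(\<Prod>j<n. norm (gso cs ! j)) < lam ^ n"
  shows "\<exists>v\<in>lattice_of cs. v \<noteq> 0 \<and> (\<forall>j<n. \<bar>v \<bullet> gso cs ! j / norm (gso cs ! j)\<bar> \<le> lam)"
proof -
  define r where "r j = norm (gso cs ! j)" for j
  define t where "t j v = v \<bullet> gso cs ! j / r j" for j v
  have rpos: "r j > 0" if "j < n" for j using nz that by (simp add: r_def)
  obtain a :: nat where a1: "a \<ge> 1" and aP: "(\<Prod>j<n. (r j / lam + 1 / real a)) < 1"
    using choose_a[OF lam, of r n] P by (auto simp: r_def)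
  define c where "c j = nat \<lceil>real a * r j / lam\<rceil>" for j
  have cge: "real a * r j / lam \<le> real (c j)" if "j < n" for j
    unfolding c_def using le_of_int_ceiling by (simp add: of_nat_nat) linarith
  have cle: "real (c j) \<le> real a * r j / lam + 1" if "j < n" for j
  proof -
    have "0 < real a * r j / lam" using a1 rpos[OF that] lam by simp
    then show ?thesis unfolding c_def using of_int_ceiling_le_add_one[of "real a * r j / lam"]
      by (simp add: of_nat_nat)
  qed
  have cpos: "c j \<ge> 1" if "j < n" for j
  proof -
    have "0 < real a * r j / lam" using a1 rpos[OF that] lam by simp
    then show ?thesis using cge[OF that] by simp
  qed
  have "real (\<Prod>j<n. c j) = (\<Prod>j<n. real (c j))" by simp
  also have "\<dots> \<le> (\<Prod>j<n. real a * (r j / lam + 1 / real a))"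
  proof (intro prod_mono conjI)
    fix j assume j: "j \<in> {..<n}"
    have "real a * (r j / lam + 1 / real a) = real a * r j / lam + 1" using a1 by (simp add: field_simps)
    then show "real (c j) \<le> real a * (r j / lam + 1 / real a)" using cle j by simp
  qed simp
  also have "\<dots> = real a ^ n * (\<Prod>j<n. (r j / lam + 1 / real a))"
    by (simp add: prod.distrib)
  also have "\<dots> < real a ^ n" using aP a1 by simp
  finally have "real (\<Prod>j<n. c j) < real (a ^ n)" by simp
  then have cprod: "(\<Prod>j<n. c j) < a ^ n" by (simp only: of_nat_less_iff)
  have box: "\<forall>k. \<exists>v. v \<in> lattice_of cs \<and> (\<forall>j<n. real (k j) * r j \<le> t j v \<and> t j v < (real (k j) + 1) * r j)"
    using exists_box[OF n nz] by (simp add: r_def t_def) blast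
  obtain V where V: "\<And>k. V k \<in> lattice_of cs" 
    "\<And>k j. j < n \<Longrightarrow> real (k j) * r j \<le> t j (V k) \<and> t j (V k) < (real (k j) + 1) * r j"
    using choice[OF box] by blast
  define \<delta> where "\<delta> j = real a * r j / real (c j)" for j
  have \<delta>pos: "\<delta> j > 0" if "j < n" for j using rpos[OF that] a1 cpos[OF that] by (simp add: \<delta>_def)
  have \<delta>le: "\<delta> j \<le> lam" if "j < n" for j
    using cge[OF that] cpos[OF that] lam by (simp add: \<delta>_def divide_le_eq field_simps)
  define D where "D = PiE {..<n} (\<lambda>_. {..<a})"
  define C where "C = PiE {..<n} (\<lambda>j. {..<c j})"
  define f where "f k = restrict (\<lambda>j. nat \<lfloor>t j (V k) / \<delta> j\<rfloor>) {..<n}" for k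
  have fC: "f ` D \<subseteq> C"
  proof
    fix y assume "y \<in> f ` D"
    then obtain k where k: "k \<in> D" "y = f k" by blast
    have "nat \<lfloor>t j (V k) / \<delta> j\<rfloor> < c j" if j: "j < n" for j
    proof -
      have "k j < a" using k j by (auto simp: D_def PiE_iff)
      then have "real (k j) + 1 \<le> real a" by linarith
      then have "t j (V k) < real a * r j"
        using V(2)[OF j, of k] rpos[OF j] mult_right_mono[of "real (k j) + 1" "real a" "r j"] by linarith
      then have "t j (V k) / \<delta> j < real (c j)"
        using \<delta>pos[OF j] cpos[OF j] rpos[OF j] a1 by (simp add: \<delta>_def divide_less_eq field_simps)
      then have "\<lfloor>t j (V k) / \<delta> j\<rfloor> < int (c j)" by (simp add: floor_less_iff)
      then show ?thesis using cpos[OF j] by arith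
    qed
    then show "y \<in> C" unfolding k f_def C_def by auto
  qed
  have "card C < card D" using cprod by (simp add: C_def D_def card_PiE)
  then have "\<not> inj_on f D"
    using card_inj_on_le[of f D C] fC by (auto simp: C_def finite_PiE)
  then obtain k k' where kk: "k \<in> D" "k' \<in> D" "k \<noteq> k'" "f k = f k'"
    unfolding inj_on_def by blast
  obtain j0 where j0: "j0 < n" "k j0 \<noteq> k' j0"
  proof -
    have "\<exists>j<n. k j \<noteq> k' j"
    proof (rule ccontr)
      assume ne: "\<not> ?thesis"
      have "k x = k' x" for x
      proof (cases "x < n")
        case True then show ?thesis using ne by blast
      next
        case False
        have k1: "k \<in> PiE {..<n} (\<lambda>_. {..<a})" "k' \<in> PiE {..<n} (\<lambda>_. {..<a})"
          using kk(1,2) by (simp_all add: D_def)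
        show ?thesis using PiE_arb[OF k1(1), of x] PiE_arb[OF k1(2), of x] False by simp
      qed
      then show False using kk(3) by auto
    qed
    then show ?thesis using that by blast
  qed
  have flo: "\<lfloor>t j (V kk) / r j\<rfloor> = int (kk j)" if "j < n" for j kk
  proof -
    have "real (kk j) \<le> t j (V kk) / r j" "t j (V kk) / r j < real (kk j) + 1"
      using V(2)[OF that, of kk] rpos[OF that] by (simp_all add: le_divide_eq divide_less_eq)
    then show ?thesis by (simp add: floor_eq_iff)
  qed
  have Vne: "V k \<noteq> V k'"
  proof
    assume "V k = V k'"
    then have "int (k j0) = int (k' j0)" using flo[OF j0(1), of k] flo[OF j0(1), of k'] by simp
    then show False using j0 by simp
  qed
  define u where "u = V k - V k'"
  have uL: "u \<in> lattice_of cs" unfolding u_def by (rule lat_diff[OF V(1) V(1)])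
  have un: "u \<noteq> 0" using Vne by (simp add: u_def)
  have "\<bar>t j u\<bar> \<le> lam" if j: "j < n" for j
  proof -
    have nn: "0 \<le> t j (V kk) / \<delta> j" for kk
    proof -
      have "0 \<le> real (kk j) * r j" using rpos[OF j] by simp
      then have "0 \<le> t j (V kk)" using V(2)[OF j, of kk] by linarith
      then show ?thesis using \<delta>pos[OF j] by simp
    qed
    have "f k j = f k' j" using kk(4) by simp
    then have "nat \<lfloor>t j (V k) / \<delta> j\<rfloor> = nat \<lfloor>t j (V k') / \<delta> j\<rfloor>" using j by (simp add: f_def)
    moreover have "0 \<le> \<lfloor>t j (V k) / \<delta> j\<rfloor>" "0 \<le> \<lfloor>t j (V k') / \<delta> j\<rfloor>"
      using nn[of k] nn[of k'] by simp_all
    ultimately have "\<lfloor>t j (V k) / \<delta> j\<rfloor> = \<lfloor>t j (V k') / \<delta> j\<rfloor>" by arith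
    then have "\<bar>t j (V k) / \<delta> j - t j (V k') / \<delta> j\<bar> < 1" by linarith
    moreover have "t j (V k) / \<delta> j - t j (V k') / \<delta> j = (t j (V k) - t j (V k')) / \<delta> j"
      by (rule diff_divide_distrib[symmetric])
    ultimately have "\<bar>t j (V k) - t j (V k')\<bar> / \<delta> j < 1"
      using \<delta>pos[OF j] by (simp add: abs_divide)
    then have "\<bar>t j (V k) - t j (V k')\<bar> < \<delta> j"
      using \<delta>pos[OF j] by (simp add: divide_less_eq)
    moreover have "t j u = t j (V k) - t j (V k')" by (simp add: u_def t_def inner_diff_left diff_divide_distrib)
    ultimately show ?thesis using \<delta>le[OF j] by simp
  qed
  then show ?thesis using uL un by (auto simp: t_def r_def)
qed



lemma mink:
  fixes cs :: "(real^'n) list"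
  assumes n: "length cs = n" "n \<ge> 1" and nz: "\<forall>j<n. gso cs ! j \<noteq> 0"
    and sh: "\<forall>v\<in>lattice_of cs. v \<noteq> 0 \<longrightarrow> norm (cs!0) \<le> norm v"
  shows "norm (cs ! 0) \<le> sqrt n * (\<Prod>j<n. norm (gso cs ! j)) powr (1/n)"
proof -
  define Pr where "Pr = (\<Prod>j<n. norm (gso cs ! j))"
  define G where "G = Pr powr (1/n)"
  have Prpos: "Pr > 0" unfolding Pr_def using nz by (intro prod_pos) simp
  have Gpos: "G > 0" using Prpos by (simp add: G_def)
  have Gn: "G ^ n = Pr"
  proof -
    have "G ^ n = G powr real n" using Gpos by (simp add: powr_realpow)
    also have "\<dots> = Pr powr (1/n * n)" unfolding G_def by (simp add: powr_powr)
    also have "\<dots> = Pr" using n Prpos by simp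
    finally show ?thesis .
  qed
  have key: "norm (cs ! 0) \<le> sqrt n * lam" if lam: "lam > G" for lam
  proof -
    have lpos: "lam > 0" using lam Gpos by simp
    have "G ^ n < lam ^ n" using lam Gpos n by (intro power_strict_mono) auto
    then have P: "(\<Prod>j<n. norm (gso cs ! j)) < lam ^ n" using Gn by (simp add: Pr_def)
    obtain v where v: "v \<in> lattice_of cs" "v \<noteq> 0"
      and tb: "\<forall>j<n. \<bar>v \<bullet> gso cs ! j / norm (gso cs ! j)\<bar> \<le> lam"
      using pigeon[OF n(1) nz lpos P] by blast
    have "(norm v)^2 = (\<Sum>j<length (gso cs). (v \<bullet> gso cs ! j / norm (gso cs ! j))^2)"
      using norm_span_gso[OF gso_orthl _ lat_span[OF v(1)]] nz n by simp
    also have "\<dots> \<le> (\<Sum>j<n. lam^2)"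
    proof -
      have "(v \<bullet> gso cs ! j / norm (gso cs ! j))^2 \<le> lam^2" if "j < n" for j
      proof -
        have "\<bar>v \<bullet> gso cs ! j / norm (gso cs ! j)\<bar>^2 \<le> lam^2"
          using tb that by (intro power_mono) auto
        then show ?thesis by (simp only: power2_abs)
      qed
      then have "(\<Sum>j<n. (v \<bullet> gso cs ! j / norm (gso cs ! j))^2) \<le> (\<Sum>j<n. lam^2)"
        by (intro sum_mono) auto
      then show ?thesis using n(1) by simp
    qed
    also have "\<dots> = (sqrt n * lam)^2" by (simp add: power_mult_distrib)
    finally have sq: "(norm v)^2 \<le> (sqrt n * lam)^2" .
    have "0 \<le> sqrt n * lam" using lpos by simp
    then have "norm v \<le> sqrt n * lam" using power2_le_imp_le[OF sq] by blast
    then show ?thesis using sh v by force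
  qed
  show ?thesis
  proof (rule ccontr)
    assume "\<not> ?thesis"
    then have gt: "norm (cs ! 0) > sqrt n * G" by (simp add: G_def Pr_def)
    have sn: "sqrt n > 0" using n by simp
    define A where "A = norm (cs ! 0) / sqrt n"
    define lam where "lam = (A + G) / 2"
    have "A > G" using gt sn by (simp add: field_simps A_def)
    then have l1: "lam > G" unfolding lam_def by (simp add: field_simps)
    have l2': "lam < A" unfolding lam_def using \<open>A > G\<close> by (simp add: field_simps)
    then have l2: "lam < norm (cs ! 0) / sqrt n" by (simp add: A_def)
    have "norm (cs ! 0) \<le> sqrt n * lam" using key[OF l1] .
    moreover have "sqrt n * lam < norm (cs ! 0)" using l2 sn by (simp add: less_divide_eq mult.commute)
    ultimately show False by simp
  qed
qed



definition pj :: "(real^'n) list \<Rightarrow> (real^'n) list" where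
  "pj xs = map (proj_perp (hd xs)) (tl xs)"

lemma chain:
  assumes h: "hkz bs" shows "k < length bs \<Longrightarrow> hkz ((pj^^k) bs) \<and> length ((pj^^k) bs) = length bs - k
      \<and> gso ((pj^^k) bs) = drop k (gso bs)"
proof (induction k)
  case 0 then show ?case using h by simp
next
  case (Suc k)
  then have IH: "hkz ((pj^^k) bs)" "length ((pj^^k) bs) = length bs - k" "gso ((pj^^k) bs) = drop k (gso bs)"
    by auto
  obtain b rest where P: "(pj^^k) bs = b # rest" using IH(2) Suc.prems by (cases "(pj^^k) bs") auto
  have e: "(pj^^Suc k) bs = map (proj_perp b) rest" by (simp add: P pj_def)
  have "hkz (map (proj_perp b) rest)" using IH(1) P by simp
  moreover have "length (map (proj_perp b) rest) = length bs - Suc k" using IH(2) P by simp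
  moreover have "gso (map (proj_perp b) rest) = drop (Suc k) (gso bs)"
    using IH(3) P gso_proj[of b rest] by (simp add: drop_Suc tl_drop)
  ultimately show ?case unfolding e by simp
qed

lemma hkz_bound:
  fixes bs :: "(real^'n) list"
  assumes lb: "lattice_basis bs" and h: "hkz bs" and k: "k < length bs"
  shows "norm (gso bs ! k) \<le> sqrt (real (length bs - k)) *
     (\<Prod>j<length bs - k. norm (gso bs ! (k + j))) powr (1 / real (length bs - k))"
proof -
  define P where "P = (pj^^k) bs"
  have c: "hkz P" "length P = length bs - k" "gso P = drop k (gso bs)"
    using chain[OF h k] by (simp_all add: P_def)
  obtain b rest where Pe: "P = b # rest" using c(2) k by (cases P) auto
  have sh: "shortest_in b (lattice_of P)" using c(1) Pe by simp
  have nz: "\<forall>j<length bs - k. gso P ! j \<noteq> 0"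
    using c(3) gso_nonzero[OF lb] k by auto
  have b: "b = gso bs ! k"
  proof -
    have "gso P ! 0 = b" unfolding Pe by (rule gso_hd)
    then show ?thesis using c(3) k by simp
  qed
  have "norm (P ! 0) \<le> sqrt (real (length bs - k)) * (\<Prod>j<length bs - k. norm (gso P ! j)) powr (1 / real (length bs - k))"
    apply (rule mink[OF c(2)])
    using k apply simp
    using nz apply simp
    using sh unfolding shortest_in_def Pe by simp
  then show ?thesis using c(3) k b Pe by simp
qed



lemma ln_ratio_ge: fixes a b :: real assumes "0 < b" "b \<le> a" shows "ln a - ln b \<ge> (a - b) / a"
proof -
  have "ln (b / a) \<le> b / a - 1" by (rule ln_le_minus_one) (use assms in simp)
  moreover have "ln (b / a) = ln b - ln a" using assms by (simp add: ln_div)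
  moreover have "b / a - 1 = - ((a - b) / a)" using assms by (simp add: field_simps)
  ultimately show ?thesis by linarith
qed

lemma frac_aux: fixes n X Y :: real shows "0 < X \<Longrightarrow> 0 < Y \<Longrightarrow> n*Y \<le> X \<Longrightarrow> n/X \<le> 1/Y"
  by (simp add: divide_simps)

lemma PL_core:
  fixes n ld lnn B t1 t2 :: real
  assumes n: "n \<ge> 2" and t: "0 \<le> t1" "t1 \<le> t2" "t2 \<le> 1" "t2 < n - 1"
    and B: "B \<ge> - (n * lnn / 2)" and l: "0 \<le> lnn" "lnn \<le> ld"
  shows "B * (1 / (n - t2) - 1 / (n - t1)) \<ge> ld / 2 * (ln (n - 1 - t2) - ln (n - 1 - t1))"
proof -
  define D where "D = t2 - t1"
  have D0: "D \<ge> 0" using t by (simp add: D_def)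
  have p1: "n - t1 > 0" "n - t2 > 0" "n - 1 - t1 > 0" "n - 1 - t2 > 0" using n t by auto
  define E where "E = D / ((n - t1) * (n - t2))"
  have E0: "E \<ge> 0" using D0 p1 by (simp add: E_def)
  have eqE: "1 / (n - t2) - 1 / (n - t1) = E" using p1 by (simp add: E_def D_def field_simps)
  have L: "ln (n - 1 - t1) - ln (n - 1 - t2) \<ge> D / (n - 1 - t1)"
    using ln_ratio_ge[of "n - 1 - t2" "n - 1 - t1"] p1 t by (simp add: D_def)
  have key: "n / ((n - t1) * (n - t2)) \<le> 1 / (n - 1 - t1)"
  proof -
    have "(n - t1) * (n - 1) \<le> (n - t1) * (n - t2)" using p1 t by (intro mult_left_mono) auto
    moreover have "n * (n - 1 - t1) \<le> (n - t1) * (n - 1)" using t n by (simp add: algebra_simps)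
    ultimately have "n * (n - 1 - t1) \<le> (n - t1) * (n - t2)" by linarith
    then show ?thesis using p1 by (intro frac_aux) auto
  qed
  have "n * lnn / 2 * E = (lnn / 2) * D * (n / ((n - t1) * (n - t2)))" by (simp add: E_def)
  also have "\<dots> \<le> (ld / 2) * D * (1 / (n - 1 - t1))"
  proof -
    have "0 \<le> n / ((n - t1) * (n - t2))" using p1 n by simp
    then show ?thesis using key l D0 p1 by (intro mult_mono) (auto intro: mult_nonneg_nonneg)
  qed
  also have "\<dots> = (ld / 2) * (D / (n - 1 - t1))" by simp
  also have "\<dots> \<le> (ld / 2) * (ln (n - 1 - t1) - ln (n - 1 - t2))"
    using L l by (intro mult_left_mono) auto
  finally have A: "n * lnn / 2 * E \<le> ld / 2 * (ln (n - 1 - t1) - ln (n - 1 - t2))" .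
  have "B * E \<ge> - (n * lnn / 2) * E" using B E0 by (intro mult_right_mono) auto
  then show ?thesis unfolding eqE using A by (simp add: algebra_simps)
qed



definition gF :: "(nat \<Rightarrow> real) \<Rightarrow> nat \<Rightarrow> real \<Rightarrow> real" where
  "gF l d x = ((1 - (x - of_int \<lfloor>x\<rfloor>)) * l (nat \<lfloor>x\<rfloor>) + (\<Sum>i = nat \<lfloor>x\<rfloor> + 1..d. l i)) / (real d + 1 - x)"

definition Gk :: "(nat \<Rightarrow> real) \<Rightarrow> nat \<Rightarrow> nat \<Rightarrow> real \<Rightarrow> real" where
  "Gk l d k t = ((1 - t) * l k + (\<Sum>i = k + 1..d. l i)) / (real d + 1 - real k - t)"

definition Kp :: "(nat \<Rightarrow> real) \<Rightarrow> nat \<Rightarrow> nat \<Rightarrow> real \<Rightarrow> real" where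
  "Kp l d k t = Gk l d k t - ln (real d) / 2 * ln (real d - real k - t)"

lemma g_piece: assumes "0 \<le> t" "t < 1" shows "gF l d (real k + t) = Gk l d k t"
proof -
  have f: "\<lfloor>real k + t\<rfloor> = int k" using assms by (simp add: floor_eq_iff)
  show ?thesis unfolding gF_def Gk_def f by (simp add: algebra_simps)
qed

lemma Gk_join: assumes "k + 1 \<le> d" shows "Gk l d k 1 = Gk l d (k + 1) 0"
proof -
  have "(\<Sum>i = k + 1..d. l i) = l (k + 1) + (\<Sum>i = Suc (k + 1)..d. l i)"
    using assms by (rule sum.atLeast_Suc_atMost)
  then show ?thesis unfolding Gk_def by (simp add: algebra_simps)
qed

lemma piece_mono:
  fixes l :: "nat \<Rightarrow> real"
  assumes d: "d \<ge> 2"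
    and M: "\<And>k. 1 \<le> k \<Longrightarrow> k < d \<Longrightarrow> (real d - real k) * l k \<le>
              (real d + 1 - real k) * ln (real d + 1 - real k) / 2 + (\<Sum>i = k + 1..d. l i)"
    and k: "1 \<le> k" "k < d" and t: "0 \<le> t1" "t1 \<le> t2" "t2 \<le> 1" "real k + t2 < real d"
  shows "Kp l d k t1 \<le> Kp l d k t2"
proof -
  define n where "n = real d + 1 - real k"
  define S where "S = (\<Sum>i = k + 1..d. l i)"
  define B where "B = S - (n - 1) * l k"
  have n2: "n \<ge> 2" using k by (simp add: n_def)
  have nd: "n \<le> real d" using k by (simp add: n_def)
  have form: "Gk l d k t = l k + B / (n - t)" if "t < n" for t
  proof -
    have "(1 - t) * l k + S = l k * (n - t) + B" by (simp add: B_def algebra_simps)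
    moreover have "real d + 1 - real k - t = n - t" by (simp add: n_def)
    ultimately have "Gk l d k t = (l k * (n - t) + B) / (n - t)" unfolding Gk_def S_def by simp
    also have "\<dots> = l k + B / (n - t)" using that by (simp add: add_divide_distrib)
    finally show ?thesis .
  qed
  have Bb: "B \<ge> - (n * ln n / 2)" using M[OF k] by (simp add: B_def S_def n_def algebra_simps)
  have lnn0: "0 \<le> ln n" using n2 by simp
  have lnnle: "ln n \<le> ln (real d)" using n2 nd by simp
  have t2lt: "t2 < n - 1" using t by (simp add: n_def)
  note core0 = PL_core[OF n2 t(1,2,3) t2lt Bb lnn0 lnnle]
  have core: "B * (1 / (n - t2) - 1 / (n - t1)) \<ge> ln (real d) / 2 * (ln (n - 1 - t2) - ln (n - 1 - t1))"
    using core0 by simp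
  have "Gk l d k t2 - Gk l d k t1 = B * (1 / (n - t2) - 1 / (n - t1))"
    using form[of t1] form[of t2] t n2 by (simp add: algebra_simps add_divide_distrib diff_divide_distrib)
  moreover have "n - 1 - t2 = real d - real k - t2" "n - 1 - t1 = real d - real k - t1" by (simp_all add: n_def)
  ultimately have fin: "ln (real d) / 2 * (ln (real d - real k - t2) - ln (real d - real k - t1))
      \<le> Gk l d k t2 - Gk l d k t1" using core by simp
  have "ln (real d) / 2 * (ln (real d - real k - t2) - ln (real d - real k - t1))
    = ln (real d) / 2 * ln (real d - real k - t2) - ln (real d) / 2 * ln (real d - real k - t1)"
    by (rule right_diff_distrib)
  then show ?thesis using fin unfolding Kp_def by linarith
qed



lemma K_mono:
  fixes l :: "nat \<Rightarrow> real"
  assumes d: "d \<ge> 2"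
    and M: "\<And>k. 1 \<le> k \<Longrightarrow> k < d \<Longrightarrow> (real d - real k) * l k \<le>
              (real d + 1 - real k) * ln (real d + 1 - real k) / 2 + (\<Sum>i = k + 1..d. l i)"
    and x: "1 \<le> x1" "x1 < x2" "x2 < real d"
  shows "gF l d x2 - gF l d x1 \<ge> ln (real d) / 2 * (ln (real d - x2) - ln (real d - x1))"
proof -
  define K where "K x = gF l d x - ln (real d) / 2 * ln (real d - x)" for x
  have Kpiece: "K (real k + t) = Kp l d k t" if "0 \<le> t" "t < 1" for k t
    unfolding K_def Kp_def g_piece[OF that] by (simp add: algebra_simps)
  have stepK: "Kp l d j 0 \<le> Kp l d (j + 1) 0" if "1 \<le> j" "j + 1 < d" for j
  proof -
    have "Kp l d j 0 \<le> Kp l d j 1" using that by (intro piece_mono[OF d M]) auto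
    also have "Kp l d j 1 = Kp l d (j + 1) 0"
      unfolding Kp_def using Gk_join[of j d l] that by (simp add: algebra_simps)
    finally show ?thesis .
  qed
  have ints: "Kp l d k 0 \<le> Kp l d m 0" if "1 \<le> k" "k \<le> m" "m < d" for k m
    using that(2,3)
  proof (induction m rule: dec_induct)
    case base then show ?case by simp
  next
    case (step m)
    then have "Kp l d m 0 \<le> Kp l d (m + 1) 0" using \<open>1 \<le> k\<close> by (intro stepK) auto
    then show ?case using step by simp
  qed
  define k1 where "k1 = nat \<lfloor>x1\<rfloor>"
  define k2 where "k2 = nat \<lfloor>x2\<rfloor>"
  define t1 where "t1 = x1 - real k1"
  define t2 where "t2 = x2 - real k2"
  have fl1: "1 \<le> \<lfloor>x1\<rfloor>" "1 \<le> \<lfloor>x2\<rfloor>" using x by (simp_all add: le_floor_iff)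
  have f1a: "real k1 = of_int \<lfloor>x1\<rfloor>" using x unfolding k1_def by simp
  have f1b: "1 \<le> k1" unfolding k1_def using fl1(1) by arith
  have f2a: "real k2 = of_int \<lfloor>x2\<rfloor>" using x unfolding k2_def by simp
  have f2b: "1 \<le> k2" unfolding k2_def using fl1(2) by arith
  note f1 = f1a f1b and f2 = f2a f2b
  have t1b: "0 \<le> t1" "t1 < 1" unfolding t1_def f1(1) by linarith+
  have t2b: "0 \<le> t2" "t2 < 1" unfolding t2_def f2(1) by linarith+
  have x1e: "x1 = real k1 + t1" and x2e: "x2 = real k2 + t2" by (simp_all add: t1_def t2_def)
  have k12: "k1 \<le> k2" unfolding k1_def k2_def using x by (intro nat_mono floor_mono) simp
  have k2d: "k2 < d"
  proof -
    have "real k2 < real d" using x f2 by linarith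
    then show ?thesis by simp
  qed
  have "K x1 \<le> K x2"
  proof (cases "k1 = k2")
    case True
    have "t1 \<le> t2" using x x1e x2e True by simp
    then have "Kp l d k1 t1 \<le> Kp l d k1 t2"
      using True f1 k2d t1b t2b x x2e by (intro piece_mono[OF d M]) auto
    then show ?thesis using Kpiece t1b t2b x1e x2e True by simp
  next
    case False
    then have lt: "k1 + 1 \<le> k2" using k12 by simp
    have "Kp l d k1 t1 \<le> Kp l d k1 1"
      using f1 lt k2d t1b by (intro piece_mono[OF d M]) auto
    also have "Kp l d k1 1 = Kp l d (k1 + 1) 0"
      unfolding Kp_def using Gk_join[of k1 d l] lt k2d by (simp add: algebra_simps)
    also have "\<dots> \<le> Kp l d k2 0" using lt k2d f1 by (intro ints) auto
    also have "\<dots> \<le> Kp l d k2 t2"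
      using f2 k2d t2b x x2e by (intro piece_mono[OF d M]) auto
    finally show ?thesis using Kpiece t1b t2b x1e x2e by simp
  qed
  moreover have "ln (real d) / 2 * (ln (real d - x2) - ln (real d - x1))
    = ln (real d) / 2 * ln (real d - x2) - ln (real d) / 2 * ln (real d - x1)"
    by (rule right_diff_distrib)
  ultimately show ?thesis unfolding K_def by linarith
qed



lemma sum_shift_k:
  fixes f :: "nat \<Rightarrow> real"
  assumes "k + n = d + 1" "1 \<le> k" "k \<le> d"
  shows "(\<Sum>j<n. f (k + j)) = f k + (\<Sum>i = k + 1..d. f i)"
proof -
  have "(\<Sum>j<n. f (k + j)) = (\<Sum>j = 0..<n. f (j + k))" by (simp add: atLeast0LessThan add.commute)
  also have "\<dots> = (\<Sum>i = 0 + k..<n + k. f i)" by (rule sum.shift_bounds_nat_ivl[symmetric])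
  also have "{0 + k..<n + k} = {k..d}" using assms by auto
  also have "(\<Sum>i = k..d. f i) = f k + (\<Sum>i = Suc k..d. f i)"
    using assms by (intro sum.atLeast_Suc_atMost) auto
  finally show ?thesis by simp
qed

lemma one_div_mult: fixes D N :: real shows "1 / D * N = N / D" by simp

theorem lemma5:
  fixes bs :: "(real^'n) list" and d :: nat and x1 x2 :: real
  assumes "lattice_basis bs" and "length bs = d" and "d \<ge> 2"
    and "hkz bs"
    and "1 \<le> x1" and "x1 < x2" and "x2 < real d"
  shows "tpi bs x2 d \<ge> sqrt (real d) powr (ln ((real d - x2) / (real d - x1))) * tpi bs x1 d"
proof -
  note lb = assms(1) and len = assms(2) and d2 = assms(3) and h = assms(4) and x = assms(5-7)
  define l where "l i = ln (bstar_norm bs i)" for i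
  have bpos: "bstar_norm bs i > 0" if "1 \<le> i" "i \<le> d" for i
    using gso_nonzero[OF lb, of "i - 1"] that len by (simp add: bstar_norm_def)
  have tpi_exp: "tpi bs x d = exp (gF l d x)" if xx: "1 \<le> x" "x < real d" for x
  proof -
    define k where "k = nat \<lfloor>x\<rfloor>"
    have kf: "real k = of_int \<lfloor>x\<rfloor>" using xx unfolding k_def by simp
    have k1: "1 \<le> k" unfolding k_def using xx by (simp add: le_nat_iff le_floor_iff)
    have kd: "k \<le> d" using kf xx by linarith
    define e where "e = 1 - x + of_int \<lfloor>x\<rfloor>"
    define A where "A = bstar_norm bs k powr e * (\<Prod>i = k + 1..d. bstar_norm bs i)"
    have Ppos: "(\<Prod>i = k + 1..d. bstar_norm bs i) > 0" using bpos k1 by (intro prod_pos) auto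
    have Apos: "A > 0" unfolding A_def using bpos[OF k1 kd] Ppos by simp
    have lP: "ln (\<Prod>i = k + 1..d. bstar_norm bs i) = (\<Sum>i = k + 1..d. ln (bstar_norm bs i))"
    proof (rule ln_prod)
      fix i assume "i \<in> {k + 1..d}"
      then have "0 < bstar_norm bs i" using k1 by (intro bpos) auto
      then show "bstar_norm bs i \<noteq> 0" by simp
    qed simp
    have lnA: "ln A = e * l k + (\<Sum>i = k + 1..d. l i)"
      unfolding A_def l_def using bpos[OF k1 kd] Ppos lP
      by (simp add: ln_mult_pos)
    have "tpi bs x d = A powr (1 / (real d + 1 - x))" by (simp add: tpi_def A_def k_def e_def)
    also have "\<dots> = exp (1 / (real d + 1 - x) * ln A)" using Apos by (simp add: powr_def)
    also have "1 / (real d + 1 - x) * ln A = gF l d x"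
    proof -
      have e: "e = 1 - (x - of_int \<lfloor>x\<rfloor>)" by (simp add: e_def)
      show ?thesis unfolding lnA gF_def e k_def by (rule one_div_mult)
    qed
    finally show ?thesis .
  qed
  have M: "(real d - real k) * l k \<le> (real d + 1 - real k) * ln (real d + 1 - real k) / 2 + (\<Sum>i = k + 1..d. l i)"
    if k: "1 \<le> k" "k < d" for k
  proof -
    define n where "n = d + 1 - k"
    have nn: "length bs - (k - 1) = n" using len k by (simp add: n_def)
    have kn: "k + n = d + 1" using k by (simp add: n_def)
    have hb: "norm (gso bs ! (k - 1)) \<le> sqrt (real n) * (\<Prod>j<n. norm (gso bs ! (k - 1 + j))) powr (1 / real n)"
    proof -
      have kl: "k - 1 < length bs" using len k by simp
      show ?thesis using hkz_bound[OF lb h kl] unfolding nn .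
    qed
    have bj: "norm (gso bs ! (k - 1 + j)) = bstar_norm bs (k + j)" for j
      using k by (simp add: bstar_norm_def)
    define P where "P = (\<Prod>j<n. bstar_norm bs (k + j))"
    have bkj: "0 < bstar_norm bs (k + j)" if "j < n" for j using kn k that by (intro bpos) auto
    have Ppos: "P > 0" unfolding P_def using bkj by (intro prod_pos) auto
    have hb2: "bstar_norm bs k \<le> sqrt (real n) * P powr (1 / real n)"
      using hb k by (simp add: bj P_def bstar_norm_def)
    have npos: "real n > 0" using k by (simp add: n_def)
    have "l k \<le> ln (sqrt (real n) * P powr (1 / real n))"
      unfolding l_def using hb2 bpos[of k] k Ppos npos by simp
    also have "\<dots> = ln (real n) / 2 + (1 / real n) * ln P"
      using npos Ppos by (simp add: ln_mult_pos ln_sqrt)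
    also have "ln P = (\<Sum>j<n. l (k + j))"
      unfolding P_def l_def using bkj by (intro ln_prod) (auto simp: less_imp_neq[symmetric])
    also have "\<dots> = l k + (\<Sum>i = k + 1..d. l i)" by (rule sum_shift_k[OF kn k(1)]) (use k in simp)
    finally have "l k \<le> ln (real n) / 2 + (1 / real n) * (l k + (\<Sum>i = k + 1..d. l i))" .
    then have "real n * l k \<le> real n * ln (real n) / 2 + (l k + (\<Sum>i = k + 1..d. l i))"
      using npos by (simp add: field_simps)
    moreover have "real n = real d + 1 - real k" using k by (simp add: n_def)
    ultimately show ?thesis by (simp add: algebra_simps)
  qed
  have K: "gF l d x2 - gF l d x1 \<ge> ln (real d) / 2 * (ln (real d - x2) - ln (real d - x1))"
    by (rule K_mono[OF d2 M x]) auto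
  have q: "ln ((real d - x2) / (real d - x1)) = ln (real d - x2) - ln (real d - x1)"
    using x by (simp add: ln_div)
  have "sqrt (real d) powr (ln ((real d - x2) / (real d - x1))) * tpi bs x1 d
      = exp (ln (real d) / 2 * (ln (real d - x2) - ln (real d - x1))) * exp (gF l d x1)"
    using d2 x by (simp add: powr_def q ln_sqrt tpi_exp mult.commute)
  also have "\<dots> = exp (ln (real d) / 2 * (ln (real d - x2) - ln (real d - x1)) + gF l d x1)"
    by (simp add: exp_add)
  also have "\<dots> \<le> exp (gF l d x2)" using K by simp
  also have "\<dots> = tpi bs x2 d" using x by (simp add: tpi_exp)
  finally show ?thesis .
qed


end
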